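(* Define the operator $G$ on $\bar{\mathcal H}$ by $G(h)(s;D,X)=h(w(D,X);D,X)\,\mathbb I(s\ge w(D,X))$. (a) For every $h\in\bar{\mathcal H}$ such that $h(w_{n+1};D_{n+1},X_{n+1})>c_0$ almost surely for some constant $c_0>0$, one has $G(h)\in\bar{\mathcal H}$ and $J(G(h))\le J(h)$; in particular, under property (P5) for $h$ and $G(h)$, $\mathbb E[G(h)_i/G(h)(w_{n+1};D_{n+1},X_{n+1})]\le\mathbb E[h_i/h(w_{n+1};D_{n+1},X_{n+1})]$. (b) $G$ is idempotent: $G(G(h))=G(h)$ for all $h\in\bar{\mathcal H}$. In particular, applied to the identity transformation $h(s;D,X)=s$, the transformation $\mathbb I_w(s;D,X)=w(D,X)\,\mathbb I(s\ge w(D,X))$ satisfies $J(\mathbb I_w)\le J(\mathrm{id})$ whenever $w_{n+1}>c_0>0$ almost surely.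
   Context: Classification setting: feature space $\mathcal X$, finite label space $\mathcal Y$, non-conformity score $S:\mathcal X\times\mathcal Y\to[0,\infty)$. Data $(X_1,Y_1),\dots,(X_{n+1},Y_{n+1})$ are exchangeable; first $n$ calibration, $(X_{n+1},Y_{n+1})$ test. $S_i=S(X_i,Y_i)$, $D_{n+1}=\{(X_i,Y_i)\}_{i=1}^n$, $D_i=D_{n+1}\setminus\{(X_i,Y_i)\}$ ($i\le n$). A transformation is a measurable function $h(s;D,X)\ge0$ of a score $s\ge0$, a finite dataset $D$ and a feature $X$; $\bar{\mathcal H}$ is the class of transformations non-decreasing in $s$ for every fixed $(D,X)$. For a transformation $h$, $h_i=h(S_i;D_i,X_i)$. A size-constraint rule $\mathcal T$ maps (dataset, feature) to $\{1,\dots,|\mathcal Y|\}$, assumed $<|\mathcal Y|$ so thresholds are finite. Threshold function $w(D,X)=\sup\{l>0:|\{y\in\mathcal Y:S(X,y)<l\}|\le\mathcal T(D,X)\}$, $w_j=w(D_j,X_j)$. For a fixed $i\in\{1,\dots,n\}$, $J(h)=\mathbb E[h_i]\cdot\mathbb E[1/h(w_{n+1};D_{n+1},X_{n+1})]$. Property (P5) for $h$: $\mathbb E[h_i/h(w_{n+1};D_{n+1},X_{n+1})]=\mathbb E[h_i]\,\mathbb E[1/h(w_{n+1};D_{n+1},X_{n+1})]$. *)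

theory Defs
  imports "HOL-Probability.Probability" "HOL-Library.Multiset" "HOL-Combinatorics.Permutations"
begin

definition exchangeable :: "'w measure \<Rightarrow> 'z measure \<Rightarrow> (nat \<Rightarrow> 'w \<Rightarrow> 'z) \<Rightarrow> nat \<Rightarrow> bool" where
  "exchangeable M MZ Z m \<longleftrightarrow>
     (\<forall>j\<in>{1..m}. Z j \<in> M \<rightarrow>\<^sub>M MZ) \<and>
     (\<forall>\<pi>. \<pi> permutes {1..m} \<longrightarrow>
        distr M (PiM {1..m} (\<lambda>_. MZ)) (\<lambda>\<omega>. \<lambda>j\<in>{1..m}. Z (\<pi> j) \<omega>)
      = distr M (PiM {1..m} (\<lambda>_. MZ)) (\<lambda>\<omega>. \<lambda>j\<in>{1..m}. Z j \<omega>))"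

text \<open>Calibration dataset D_{n+1} (a multiset of the first n data points) and D_i.\<close>
definition dataD :: "(nat \<Rightarrow> 'w \<Rightarrow> 'x) \<Rightarrow> (nat \<Rightarrow> 'w \<Rightarrow> 'y) \<Rightarrow> nat \<Rightarrow> 'w \<Rightarrow> ('x \<times> 'y) multiset" where
  "dataD X Y n \<omega> = mset (map (\<lambda>j. (X j \<omega>, Y j \<omega>)) [1..<Suc n])"

definition dataDi :: "(nat \<Rightarrow> 'w \<Rightarrow> 'x) \<Rightarrow> (nat \<Rightarrow> 'w \<Rightarrow> 'y) \<Rightarrow> nat \<Rightarrow> nat \<Rightarrow> 'w \<Rightarrow> ('x \<times> 'y) multiset" where
  "dataDi X Y n i \<omega> = dataD X Y n \<omega> - {#(X i \<omega>, Y i \<omega>)#}"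

text \<open>Threshold function w(D,X) = sup{l>0 : |{y : S(X,y) < l}| \<le> T(D,X)} (sup of the empty set read as 0).\<close>
definition thr :: "('x \<Rightarrow> 'y \<Rightarrow> real) \<Rightarrow> (('x \<times> 'y) multiset \<Rightarrow> 'x \<Rightarrow> nat) \<Rightarrow> ('x \<times> 'y) multiset \<Rightarrow> 'x \<Rightarrow> real" where
  "thr S T D x = (let L = {l::real. 0 < l \<and> card {y. S x y < l} \<le> T D x} in if L = {} then 0 else Sup L)"

definition Hbar :: "(('x \<times> 'y) multiset \<times> 'x) measure \<Rightarrow> (real \<Rightarrow> ('x \<times> 'y) multiset \<Rightarrow> 'x \<Rightarrow> real) set" where
  "Hbar N = {h. (\<lambda>(s, c). h s (fst c) (snd c)) \<in> borel_measurable (borel \<Otimes>\<^sub>M N) \<and>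
                (\<forall>s D x. 0 \<le> s \<longrightarrow> 0 \<le> h s D x) \<and>
                (\<forall>D x. mono_on {0..} (\<lambda>s. h s D x))}"

definition Gop :: "(('x \<times> 'y) multiset \<Rightarrow> 'x \<Rightarrow> real) \<Rightarrow> (real \<Rightarrow> ('x \<times> 'y) multiset \<Rightarrow> 'x \<Rightarrow> real)
                     \<Rightarrow> (real \<Rightarrow> ('x \<times> 'y) multiset \<Rightarrow> 'x \<Rightarrow> real)" where
  "Gop w h = (\<lambda>s D x. h (w D x) D x * (if w D x \<le> s then 1 else 0))"

definition h_cal :: "('x \<Rightarrow> 'y \<Rightarrow> real) \<Rightarrow> (nat \<Rightarrow> 'w \<Rightarrow> 'x) \<Rightarrow> (nat \<Rightarrow> 'w \<Rightarrow> 'y) \<Rightarrow> nat \<Rightarrow> nat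
                      \<Rightarrow> (real \<Rightarrow> ('x \<times> 'y) multiset \<Rightarrow> 'x \<Rightarrow> real) \<Rightarrow> 'w \<Rightarrow> real" where
  "h_cal S X Y n i h \<omega> = h (S (X i \<omega>) (Y i \<omega>)) (dataDi X Y n i \<omega>) (X i \<omega>)"

definition h_test :: "('x \<Rightarrow> 'y \<Rightarrow> real) \<Rightarrow> (('x \<times> 'y) multiset \<Rightarrow> 'x \<Rightarrow> nat) \<Rightarrow> (nat \<Rightarrow> 'w \<Rightarrow> 'x) \<Rightarrow> (nat \<Rightarrow> 'w \<Rightarrow> 'y) \<Rightarrow> nat
                      \<Rightarrow> (real \<Rightarrow> ('x \<times> 'y) multiset \<Rightarrow> 'x \<Rightarrow> real) \<Rightarrow> 'w \<Rightarrow> real" where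
  "h_test S T X Y n h \<omega> = h (thr S T (dataD X Y n \<omega>) (X (Suc n) \<omega>)) (dataD X Y n \<omega>) (X (Suc n) \<omega>)"

definition Jfun :: "'w measure \<Rightarrow> ('x \<Rightarrow> 'y \<Rightarrow> real) \<Rightarrow> (('x \<times> 'y) multiset \<Rightarrow> 'x \<Rightarrow> nat) \<Rightarrow> (nat \<Rightarrow> 'w \<Rightarrow> 'x) \<Rightarrow> (nat \<Rightarrow> 'w \<Rightarrow> 'y)
                     \<Rightarrow> nat \<Rightarrow> nat \<Rightarrow> (real \<Rightarrow> ('x \<times> 'y) multiset \<Rightarrow> 'x \<Rightarrow> real) \<Rightarrow> ennreal" where
  "Jfun M S T X Y n i h =
     (\<integral>\<^sup>+ \<omega>. ennreal (h_cal S X Y n i h \<omega>) \<partial>M) * (\<integral>\<^sup>+ \<omega>. ennreal (1 / h_test S T X Y n h \<omega>) \<partial>M)"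

definition ratio_exp :: "'w measure \<Rightarrow> ('x \<Rightarrow> 'y \<Rightarrow> real) \<Rightarrow> (('x \<times> 'y) multiset \<Rightarrow> 'x \<Rightarrow> nat) \<Rightarrow> (nat \<Rightarrow> 'w \<Rightarrow> 'x) \<Rightarrow> (nat \<Rightarrow> 'w \<Rightarrow> 'y)
                     \<Rightarrow> nat \<Rightarrow> nat \<Rightarrow> (real \<Rightarrow> ('x \<times> 'y) multiset \<Rightarrow> 'x \<Rightarrow> real) \<Rightarrow> ennreal" where
  "ratio_exp M S T X Y n i h = (\<integral>\<^sup>+ \<omega>. ennreal (h_cal S X Y n i h \<omega> / h_test S T X Y n h \<omega>) \<partial>M)"

definition P5 :: "'w measure \<Rightarrow> ('x \<Rightarrow> 'y \<Rightarrow> real) \<Rightarrow> (('x \<times> 'y) multiset \<Rightarrow> 'x \<Rightarrow> nat) \<Rightarrow> (nat \<Rightarrow> 'w \<Rightarrow> 'x) \<Rightarrow> (nat \<Rightarrow> 'w \<Rightarrow> 'y)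
                     \<Rightarrow> nat \<Rightarrow> nat \<Rightarrow> (real \<Rightarrow> ('x \<times> 'y) multiset \<Rightarrow> 'x \<Rightarrow> real) \<Rightarrow> bool" where
  "P5 M S T X Y n i h \<longleftrightarrow> ratio_exp M S T X Y n i h = Jfun M S T X Y n i h"

end

theory Submission
  imports Defs
begin

lemma thr_bdd:
  fixes S :: "'x \<Rightarrow> 'y::finite \<Rightarrow> real"
  assumes "T D x < CARD('y)"
  shows "bdd_above {l::real. 0 < l \<and> card {y. S x y < l} \<le> T D x}"
proof (rule bdd_aboveI)
  fix l assume l: "l \<in> {l::real. 0 < l \<and> card {y. S x y < l} \<le> T D x}"
  show "l \<le> Max (range (S x))"
  proof (rule ccontr)
    assume "\<not> l \<le> Max (range (S x))"
    then have "S x y < l" for y using Max_ge[of "range (S x)" "S x y"] by (simp add: not_le)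
    then have "{y. S x y < l} = UNIV" by auto
    then show False using l assms by auto
  qed
qed

lemma thr_nonneg:
  fixes S :: "'x \<Rightarrow> 'y::finite \<Rightarrow> real"
  assumes "T D x < CARD('y)"
  shows "0 \<le> thr S T D x"
proof -
  let ?L = "{l::real. 0 < l \<and> card {y. S x y < l} \<le> T D x}"
  show ?thesis
  proof (cases "?L = {}")
    case True then show ?thesis by (simp add: thr_def)
  next
    case False
    then obtain l where l: "l \<in> ?L" by blast
    have "l \<le> Sup ?L" by (rule cSup_upper[OF l thr_bdd[of T D x S, OF assms]])
    with l False show ?thesis by (simp add: thr_def Let_def)
  qed
qed

lemma thr_greater:
  fixes S :: "'x \<Rightarrow> 'y::finite \<Rightarrow> real"
  assumes "T D x < CARD('y)" "0 \<le> a"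
  shows "a < thr S T D x \<longleftrightarrow> card {y. S x y \<le> a} \<le> T D x"
proof -
  let ?L = "{l::real. 0 < l \<and> card {y. S x y < l} \<le> T D x}"
  have bdd: "bdd_above ?L" by (rule thr_bdd[of T D x S, OF assms(1)])
  show ?thesis
  proof
    assume a: "a < thr S T D x"
    then have ne: "?L \<noteq> {}" using assms(2) by (auto simp: thr_def Let_def split: if_splits)
    have "thr S T D x = Sup ?L" unfolding thr_def Let_def using ne by (rule if_not_P)
    with a have "a < Sup ?L" by simp
    then obtain l where l: "l \<in> ?L" "a < l" using less_cSup_iff[OF ne bdd] by blast
    have "{y. S x y \<le> a} \<subseteq> {y. S x y < l}" using l by auto
    then have "card {y. S x y \<le> a} \<le> card {y. S x y < l}" by (simp add: card_mono)
    with l show "card {y. S x y \<le> a} \<le> T D x" by simp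
  next
    assume c: "card {y. S x y \<le> a} \<le> T D x"
    define l where "l = (if {y. a < S x y} = {} then a + 1 else Min (S x ` {y. a < S x y}))"
    have al: "a < l" unfolding l_def by (auto simp: Min_gr_iff)
    have "{y. S x y < l} = {y. S x y \<le> a}"
    proof (cases "{y. a < S x y} = {}")
      case True
      then have "S x y \<le> a" for y by (metis (mono_tags, lifting) empty_Collect_eq not_le)
      moreover have "l = a + 1" using True by (simp add: l_def)
      ultimately show ?thesis by (metis (mono_tags, lifting) Collect_cong less_add_one order_le_less_trans)
    next
      case False
      then have lm: "l = Min (S x ` {y. a < S x y})" unfolding l_def by (rule if_not_P)
      have "S x y \<le> a" if h: "S x y < l" for y
      proof (rule ccontr)
        assume "\<not> S x y \<le> a"
        then have "S x y \<in> S x ` {y. a < S x y}" by auto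
        then have "Min (S x ` {y. a < S x y}) \<le> S x y" by (intro Min_le) auto
        with h lm show False by simp
      qed
      moreover have "S x y \<le> a \<Longrightarrow> S x y < l" for y using al by linarith
      ultimately show ?thesis by blast
    qed
    with c al assms(2) have lL: "l \<in> ?L" by auto
    then have "l \<le> Sup ?L" by (rule cSup_upper[OF _ bdd])
    with al lL show "a < thr S T D x" by (auto simp: thr_def Let_def)
  qed
qed
lemma thr_meas:
  fixes S :: "'x \<Rightarrow> 'y::finite \<Rightarrow> real" and N :: "(('x \<times> 'y) multiset \<times> 'x) measure"
  assumes SM: "\<forall>y. (\<lambda>x. S x y) \<in> borel_measurable MX" and sn: "snd \<in> N \<rightarrow>\<^sub>M MX"
    and TM: "(\<lambda>c. T (fst c) (snd c)) \<in> N \<rightarrow>\<^sub>M count_space UNIV"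
    and Tb: "\<forall>D x. T D x < CARD('y)"
  shows "(\<lambda>c. thr S T (fst c) (snd c)) \<in> borel_measurable N"
  unfolding borel_measurable_iff_greater
proof
  fix a :: real
  show "{c \<in> space N. a < thr S T (fst c) (snd c)} \<in> sets N"
  proof (cases "a < 0")
    case True
    then have "{c \<in> space N. a < thr S T (fst c) (snd c)} = space N"
      using thr_nonneg[of T _ _ S] Tb by (auto intro: less_le_trans)
    then show ?thesis by simp
  next
    case False
    have Sc: "(\<lambda>c. S (snd c) y) \<in> borel_measurable N" for y
      using measurable_compose[OF sn] SM by blast
    have cs: "real (card {y. S (snd c) y \<le> a}) = (\<Sum>y\<in>UNIV. if S (snd c) y \<le> a then 1 else 0)" for c
    proof -
      have "real (card {y. S (snd c) y \<le> a}) = (\<Sum>y\<in>{y\<in>UNIV. S (snd c) y \<le> a}. 1)" by simp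
      also have "\<dots> = (\<Sum>y\<in>UNIV. if S (snd c) y \<le> a then 1 else 0)" by (rule sum.inter_filter) simp
      finally show ?thesis .
    qed
    have m1: "(\<lambda>c. real (card {y. S (snd c) y \<le> a})) \<in> borel_measurable N"
      unfolding cs
    proof (intro borel_measurable_sum measurable_If)
      fix y show "{c \<in> space N. S (snd c) y \<le> a} \<in> sets N"
        using Sc[of y] by measurable
    qed auto
    have m2: "(\<lambda>c. real (T (fst c) (snd c))) \<in> borel_measurable N"
      using measurable_compose[OF TM, of real borel] by simp
    have "{c \<in> space N. a < thr S T (fst c) (snd c)} =
          {c \<in> space N. real (card {y. S (snd c) y \<le> a}) \<le> real (T (fst c) (snd c))}"
      using thr_greater[of T _ _ a S] Tb False by auto
    then show ?thesis using borel_measurable_le[OF m1 m2] by simp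
  qed
qed
lemma Gop_Hbar:
  fixes w :: "('x \<times> 'y) multiset \<Rightarrow> 'x \<Rightarrow> real"
  assumes h: "h \<in> Hbar N" and wm: "(\<lambda>c. w (fst c) (snd c)) \<in> borel_measurable N"
    and wn: "\<forall>D x. 0 \<le> w D x"
  shows "Gop w h \<in> Hbar N"
proof -
  have hm: "(\<lambda>(s, c). h s (fst c) (snd c)) \<in> borel_measurable (borel \<Otimes>\<^sub>M N)"
    and hn: "\<forall>s D x. 0 \<le> s \<longrightarrow> 0 \<le> h s D x" and hmono: "\<forall>D x. mono_on {0..} (\<lambda>s. h s D x)"
    using h by (auto simp: Hbar_def)
  have pm: "(\<lambda>p. (w (fst (snd p)) (snd (snd p)), snd p)) \<in> (borel \<Otimes>\<^sub>M N) \<rightarrow>\<^sub>M (borel \<Otimes>\<^sub>M N)"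
  proof (rule measurable_Pair)
    show "(\<lambda>p. w (fst (snd p)) (snd (snd p))) \<in> borel_measurable (borel \<Otimes>\<^sub>M N)"
      using measurable_compose[OF measurable_snd[of borel N] wm] by simp
  qed simp
  have f1: "(\<lambda>p. h (w (fst (snd p)) (snd (snd p))) (fst (snd p)) (snd (snd p))) \<in> borel_measurable (borel \<Otimes>\<^sub>M N)"
    using measurable_compose[OF pm hm] by (simp add: case_prod_beta)
  have wm2: "(\<lambda>p. w (fst (snd p)) (snd (snd p))) \<in> borel_measurable (borel \<Otimes>\<^sub>M N)"
    using measurable_compose[OF measurable_snd[of borel N] wm] by simp
  have f2: "(\<lambda>p::real \<times> _. if w (fst (snd p)) (snd (snd p)) \<le> fst p then 1 else (0::real)) \<in> borel_measurable (borel \<Otimes>\<^sub>M N)"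
    by (intro measurable_If borel_measurable_le[OF wm2 measurable_fst] measurable_const) auto
  have "(\<lambda>(s, c). Gop w h s (fst c) (snd c)) = (\<lambda>p. h (w (fst (snd p)) (snd (snd p))) (fst (snd p)) (snd (snd p)) *
        (if w (fst (snd p)) (snd (snd p)) \<le> fst p then 1 else (0::real)))"
    by (auto simp: Gop_def)
  then have m: "(\<lambda>(s, c). Gop w h s (fst c) (snd c)) \<in> borel_measurable (borel \<Otimes>\<^sub>M N)"
    using borel_measurable_times[OF f1 f2] by simp
  have n: "\<forall>s D x. 0 \<le> s \<longrightarrow> 0 \<le> Gop w h s D x"
    using hn wn by (simp add: Gop_def)
  have mo: "mono_on {0..} (\<lambda>s. Gop w h s D x)" for D x
    by (rule mono_onI) (use hn wn in \<open>auto simp: Gop_def\<close>)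
  show ?thesis using m n mo by (simp add: Hbar_def)
qed
lemma Jfun_le:
  assumes "\<And>\<omega>. h_cal S X Y n i g \<omega> \<le> h_cal S X Y n i h \<omega>"
    and "\<And>\<omega>. h_test S T X Y n g \<omega> = h_test S T X Y n h \<omega>"
  shows "Jfun M S T X Y n i g \<le> Jfun M S T X Y n i h"
proof -
  have "(\<integral>\<^sup>+ \<omega>. ennreal (h_cal S X Y n i g \<omega>) \<partial>M) \<le> (\<integral>\<^sup>+ \<omega>. ennreal (h_cal S X Y n i h \<omega>) \<partial>M)"
    by (intro nn_integral_mono ennreal_leI assms(1))
  then show ?thesis unfolding Jfun_def assms(2) by (rule mult_right_mono) simp
qed

theorem corollary2:
  fixes M :: "'w measure" and MX :: "'x measure"
    and N :: "(('x \<times> 'y::finite) multiset \<times> 'x) measure"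
    and X :: "nat \<Rightarrow> 'w \<Rightarrow> 'x" and Y :: "nat \<Rightarrow> 'w \<Rightarrow> 'y"
    and S :: "'x \<Rightarrow> 'y \<Rightarrow> real" and T :: "('x \<times> 'y) multiset \<Rightarrow> 'x \<Rightarrow> nat"
    and n i :: nat
  assumes "prob_space M"
    and "exchangeable M (MX \<Otimes>\<^sub>M count_space UNIV) (\<lambda>j \<omega>. (X j \<omega>, Y j \<omega>)) (Suc n)"
    and "\<forall>x y. 0 \<le> S x y"
    and "\<forall>y. (\<lambda>x. S x y) \<in> borel_measurable MX"
    and "snd \<in> N \<rightarrow>\<^sub>M MX"
    and "(\<lambda>c. T (fst c) (snd c)) \<in> N \<rightarrow>\<^sub>M count_space UNIV"
    and "\<forall>D x. 1 \<le> T D x \<and> T D x < CARD('y)"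
    and "(\<lambda>\<omega>. (dataD X Y n \<omega>, X (Suc n) \<omega>)) \<in> M \<rightarrow>\<^sub>M N"
    and "\<forall>j\<in>{1..n}. (\<lambda>\<omega>. (dataDi X Y n j \<omega>, X j \<omega>)) \<in> M \<rightarrow>\<^sub>M N"
    and "1 \<le> i" and "i \<le> n"
  shows
    "(\<forall>h c0. h \<in> Hbar N \<and> 0 < c0 \<and> (AE \<omega> in M. c0 < h_test S T X Y n h \<omega>) \<longrightarrow>
        Gop (thr S T) h \<in> Hbar N \<and>
        Jfun M S T X Y n i (Gop (thr S T) h) \<le> Jfun M S T X Y n i h \<and>
        (P5 M S T X Y n i h \<and> P5 M S T X Y n i (Gop (thr S T) h) \<longrightarrow>
           ratio_exp M S T X Y n i (Gop (thr S T) h) \<le> ratio_exp M S T X Y n i h))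
     \<and> (\<forall>h\<in>Hbar N. Gop (thr S T) (Gop (thr S T) h) = Gop (thr S T) h)
     \<and> (\<forall>c0. 0 < c0 \<and> (AE \<omega> in M. c0 < thr S T (dataD X Y n \<omega>) (X (Suc n) \<omega>)) \<longrightarrow>
          Jfun M S T X Y n i (\<lambda>s D x. thr S T D x * (if thr S T D x \<le> s then 1 else 0))
            \<le> Jfun M S T X Y n i (\<lambda>s D x. s))"
proof -
  have Tb: "\<forall>D x. T D x < CARD('y)" using assms(7) by blast
  have wn: "\<forall>D x. 0 \<le> thr S T D x" using thr_nonneg[of T _ _ S] Tb by blast
  have wm: "(\<lambda>c. thr S T (fst c) (snd c)) \<in> borel_measurable N"
    by (rule thr_meas[OF assms(4) assms(5) assms(6) Tb])
  have A: "Gop (thr S T) h \<in> Hbar N \<and>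
        Jfun M S T X Y n i (Gop (thr S T) h) \<le> Jfun M S T X Y n i h \<and>
        (P5 M S T X Y n i h \<and> P5 M S T X Y n i (Gop (thr S T) h) \<longrightarrow>
           ratio_exp M S T X Y n i (Gop (thr S T) h) \<le> ratio_exp M S T X Y n i h)"
    if h: "h \<in> Hbar N" for h
  proof -
    have hn: "\<forall>s D x. 0 \<le> s \<longrightarrow> 0 \<le> h s D x" and hmono: "\<forall>D x. mono_on {0..} (\<lambda>s. h s D x)"
      using h by (auto simp: Hbar_def)
    have c: "h_cal S X Y n i (Gop (thr S T) h) \<omega> \<le> h_cal S X Y n i h \<omega>" for \<omega>
    proof -
      let ?s = "S (X i \<omega>) (Y i \<omega>)" and ?D = "dataDi X Y n i \<omega>" and ?x = "X i \<omega>"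
      have s0: "0 \<le> ?s" using assms(3) by blast
      have w0: "0 \<le> thr S T ?D ?x" using wn by blast
      show ?thesis
      proof (cases "thr S T ?D ?x \<le> ?s")
        case True
        then have "h (thr S T ?D ?x) ?D ?x \<le> h ?s ?D ?x"
          using mono_onD[OF spec[OF spec[OF hmono, of ?D], of ?x], of "thr S T ?D ?x" ?s] w0 s0 by simp
        then show ?thesis using True by (simp add: h_cal_def Gop_def)
      next
        case False
        then show ?thesis using hn s0 by (simp add: h_cal_def Gop_def)
      qed
    qed
    have t: "h_test S T X Y n (Gop (thr S T) h) \<omega> = h_test S T X Y n h \<omega>" for \<omega>
      by (simp add: h_test_def Gop_def)
    have J: "Jfun M S T X Y n i (Gop (thr S T) h) \<le> Jfun M S T X Y n i h"
      by (rule Jfun_le[OF c t])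
    show ?thesis using Gop_Hbar[OF h wm wn] J by (simp add: P5_def)
  qed
  have B: "Gop (thr S T) (Gop (thr S T) h) = Gop (thr S T) h" for h
    by (auto simp: Gop_def fun_eq_iff)
  have C: "Jfun M S T X Y n i (\<lambda>s D x. thr S T D x * (if thr S T D x \<le> s then 1 else 0))
            \<le> Jfun M S T X Y n i (\<lambda>s D x. s)"
  proof (rule Jfun_le)
    fix \<omega>
    show "h_cal S X Y n i (\<lambda>s D x. thr S T D x * (if thr S T D x \<le> s then 1 else 0)) \<omega>
          \<le> h_cal S X Y n i (\<lambda>s D x. s) \<omega>"
      using assms(3) by (simp add: h_cal_def)
    show "h_test S T X Y n (\<lambda>s D x. thr S T D x * (if thr S T D x \<le> s then 1 else 0)) \<omega>
          = h_test S T X Y n (\<lambda>s D x. s) \<omega>"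
      by (simp add: h_test_def)
  qed
  show ?thesis using A B C by blast
qed
end
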